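(* Let $f\in\mathbb{C}[h]$, $n\in\mathbb{N}$ and $\dot z\in\mathbb{C}$ with $\dot z+f^{(n)}(-\dot z)=0$. (1) The formulas $yt^i=(\dot z+f^{(i)}(-\dot z))t^{i-1}$, $ht^i=f^{(i)}(-\dot z)t^i$, $xt^i=t^{i+1}$ for $i=0,1,\dots,n-1$ define an $\mathcal{H}(f)$-module structure $C_{\mathcal{H}(f)}(\dot z,n)$ on $\mathbb{C}[t]/(t^n)$ (with basis the classes of $1,t,\dots,t^{n-1}$; here $t^{-1}:=0$ and $t^n=0$). (2) $C_{\mathcal{H}(f)}(\dot z,n)$ is a simple $\mathcal{H}(f)$-module if and only if $\dot z+f^{(i)}(-\dot z)\neq 0$ for all $i=1,2,\dots,n-1$.
   Context: For $f(h)\in\mathbb{C}[h]$, $\mathcal{H}(f)$ is the unital associative $\mathbb{C}$-algebra generated by $x,y,h$ with relations $hx=xf(h)$, $yh=f(h)y$, $yx-xy=f(h)-h$. Iterates: $f^{(0)}(h)=h$, $f^{(1)}=f$, $f^{(i+1)}(h)=f(f^{(i)}(h))$. $\mathbb{N}$ denotes the positive integers. *)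

theory Defs
  imports "HOL-Computational_Algebra.Polynomial" "Jordan_Normal_Form.Matrix"
begin

primrec piter :: "complex poly \<Rightarrow> nat \<Rightarrow> complex poly" where
  "piter f 0 = [:0, 1:]"
| "piter f (Suc i) = pcompose f (piter f i)"

definition mat_poly :: "nat \<Rightarrow> complex poly \<Rightarrow> complex mat \<Rightarrow> complex mat" where
  "mat_poly n p A = foldr (\<lambda>i B. coeff p i \<cdot>\<^sub>m (A ^\<^sub>m i) + B) [0..<Suc (degree p)] (0\<^sub>m n n)"

(* A module over H(f) on C^n is given by operators X, Y, H (images of x, y, h)
   satisfying the defining relations hx = x f(h), yh = f(h) y, yx - xy = f(h) - h. *)
definition Hf_module :: "complex poly \<Rightarrow> nat \<Rightarrow> complex mat \<Rightarrow> complex mat \<Rightarrow> complex mat \<Rightarrow> bool" where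
  "Hf_module f n X Y H \<longleftrightarrow>
     X \<in> carrier_mat n n \<and> Y \<in> carrier_mat n n \<and> H \<in> carrier_mat n n \<and>
     H * X = X * mat_poly n f H \<and>
     Y * H = mat_poly n f H * Y \<and>
     Y * X - X * Y = mat_poly n f H - H"

(* submodules = subspaces of C^n invariant under the generators x, y, h *)
definition invariant_subspace :: "nat \<Rightarrow> complex mat \<Rightarrow> complex mat \<Rightarrow> complex mat \<Rightarrow> complex vec set \<Rightarrow> bool" where
  "invariant_subspace n X Y H W \<longleftrightarrow>
     W \<subseteq> carrier_vec n \<and> 0\<^sub>v n \<in> W \<and>
     (\<forall>u\<in>W. \<forall>v\<in>W. u + v \<in> W) \<and> (\<forall>c. \<forall>u\<in>W. c \<cdot>\<^sub>v u \<in> W) \<and>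
     (\<forall>u\<in>W. X *\<^sub>v u \<in> W \<and> Y *\<^sub>v u \<in> W \<and> H *\<^sub>v u \<in> W)"

definition simple_Hf_module :: "nat \<Rightarrow> complex mat \<Rightarrow> complex mat \<Rightarrow> complex mat \<Rightarrow> bool" where
  "simple_Hf_module n X Y H \<longleftrightarrow> n > 0 \<and>
     (\<forall>W. invariant_subspace n X Y H W \<longrightarrow> W = {0\<^sub>v n} \<or> W = carrier_vec n)"

(* Matrices of x, y, h on C[t]/(t^n) w.r.t. basis 1, t, ..., t^(n-1) (index j <-> t^j);
   column j is the image of t^j. *)
definition Cx :: "nat \<Rightarrow> complex mat" where
  "Cx n = mat n n (\<lambda>(i, j). if i = j + 1 then 1 else 0)"

definition Cy :: "complex poly \<Rightarrow> complex \<Rightarrow> nat \<Rightarrow> complex mat" where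
  "Cy f z n = mat n n (\<lambda>(i, j). if j = i + 1 then z + poly (piter f j) (- z) else 0)"

definition Ch :: "complex poly \<Rightarrow> complex \<Rightarrow> nat \<Rightarrow> complex mat" where
  "Ch f z n = mat n n (\<lambda>(i, j). if i = j then poly (piter f i) (- z) else 0)"

end

theory Submission
  imports Defs
begin

definition dg :: "nat \<Rightarrow> (nat \<Rightarrow> complex) \<Rightarrow> complex mat" where
  "dg n d = mat n n (\<lambda>(i, j). if i = j then d i else 0)"

lemma dg_carrier[simp]: "dg n d \<in> carrier_mat n n" by (simp add: dg_def)

lemma sum_delta_l: "(\<Sum>l\<in>{0..<n::nat}. (if i = l then x l else 0) * (y l::complex)) = (if i < n then x i * y i else 0)"
proof -
  have "(\<Sum>l\<in>{0..<n::nat}. (if i = l then x l else 0) * y l) = (\<Sum>l\<in>{0..<n}. if i = l then x l * y l else 0)"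
    by (rule sum.cong) auto
  then show ?thesis by (simp add: sum.delta sum.delta')
qed

lemma sum_delta_r: "(\<Sum>l\<in>{0..<n::nat}. (y l::complex) * (if l = j then x l else 0)) = (if j < n then y j * x j else 0)"
proof -
  have "(\<Sum>l\<in>{0..<n}. y l * (if l = j then x l else 0)) = (\<Sum>l\<in>{0..<n}. if l = j then y l * x l else 0)"
    by (rule sum.cong) auto
  then show ?thesis by (simp add: sum.delta sum.delta')
qed

lemma dg_mult: "dg n d * dg n e = dg n (\<lambda>i. d i * e i)"
  by (rule eq_matI) (auto simp: dg_def scalar_prod_def row_def col_def sum_delta_l)

lemma dg_pow: "dg n d ^\<^sub>m k = dg n (\<lambda>i. d i ^ k)"
proof (induction k)
  case 0 then show ?case by (rule eq_matI) (auto simp: dg_def)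
next
  case (Suc k) then show ?case by (simp add: dg_mult mult.commute)
qed

lemma dg_smult: "c \<cdot>\<^sub>m dg n d = dg n (\<lambda>i. c * d i)"
  by (rule eq_matI) (auto simp: dg_def)

lemma dg_add: "dg n d + dg n e = dg n (\<lambda>i. d i + e i)"
  by (rule eq_matI) (auto simp: dg_def)

lemma foldr_dg: "foldr (\<lambda>i B. c i \<cdot>\<^sub>m (dg n d ^\<^sub>m i) + B) xs (0\<^sub>m n n)
   = dg n (\<lambda>l. \<Sum>i\<leftarrow>xs. c i * d l ^ i)"
proof (induction xs)
  case Nil then show ?case by (rule eq_matI) (auto simp: dg_def)
next
  case (Cons a xs) then show ?case by (simp add: dg_pow dg_smult dg_add)
qed

lemma mat_poly_dg: "mat_poly n p (dg n d) = dg n (\<lambda>l. poly p (d l))"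
  unfolding mat_poly_def foldr_dg
  by (simp add: poly_altdef sum_set_upt_conv_sum_list_nat[symmetric] atLeast0LessThan lessThan_Suc_atMost del: upt_Suc)

definition ca :: "complex poly \<Rightarrow> complex \<Rightarrow> nat \<Rightarrow> complex" where
  "ca f z j = z + poly (piter f j) (- z)"
definition cb :: "complex poly \<Rightarrow> complex \<Rightarrow> nat \<Rightarrow> complex" where
  "cb f z j = poly (piter f j) (- z)"

lemma Ch_dg: "Ch f z n = dg n (cb f z)" unfolding Ch_def dg_def cb_def[abs_def] by simp

lemma cb_Suc: "poly f (cb f z j) = cb f z (Suc j)"
  by (simp add: cb_def poly_pcompose)

lemma fH: "mat_poly n f (Ch f z n) = dg n (\<lambda>j. cb f z (Suc j))"
  by (simp add: Ch_dg mat_poly_dg cb_Suc)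

lemma carriers[simp]: "Cx n \<in> carrier_mat n n" "Cy f z n \<in> carrier_mat n n" "Ch f z n \<in> carrier_mat n n"
  by (auto simp: Cx_def Cy_def Ch_def)

lemma dims[simp]: "dim_row (Cx n) = n" "dim_col (Cx n) = n" "dim_row (Cy f z n) = n" "dim_col (Cy f z n) = n"
  "dim_row (Ch f z n) = n" "dim_col (Ch f z n) = n" "dim_row (dg n d) = n" "dim_col (dg n d) = n"
  by (auto simp: Cx_def Cy_def Ch_def dg_def)

lemma row_Cx: "i < n \<Longrightarrow> row (Cx n) i = (if 0 < i then unit_vec n (i - 1) else 0\<^sub>v n)"
  by (rule eq_vecI) (auto simp: Cx_def)
lemma col_Cx: "j < n \<Longrightarrow> col (Cx n) j = (if j + 1 < n then unit_vec n (j + 1) else 0\<^sub>v n)"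
  by (rule eq_vecI) (auto simp: Cx_def)
lemma row_Cy: "i < n \<Longrightarrow> row (Cy f z n) i = (if i + 1 < n then ca f z (i+1) \<cdot>\<^sub>v unit_vec n (i + 1) else 0\<^sub>v n)"
  by (rule eq_vecI) (auto simp: Cy_def ca_def)
lemma col_Cy: "j < n \<Longrightarrow> col (Cy f z n) j = (if 0 < j then ca f z j \<cdot>\<^sub>v unit_vec n (j - 1) else 0\<^sub>v n)"
  by (rule eq_vecI) (auto simp: Cy_def ca_def)
lemma row_dg: "i < n \<Longrightarrow> row (dg n d) i = d i \<cdot>\<^sub>v unit_vec n i"
  by (rule eq_vecI) (auto simp: dg_def)
lemma col_dg: "j < n \<Longrightarrow> col (dg n d) j = d j \<cdot>\<^sub>v unit_vec n j"
  by (rule eq_vecI) (auto simp: dg_def)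

lemma cb0: "cb f z 0 = - z" by (simp add: cb_def)
lemma ca_cb: "ca f z j = z + cb f z j" by (simp add: ca_def cb_def)

lemma part1:
  assumes "n \<ge> 1" and an: "ca f z n = 0"
  shows "Hf_module f n (Cx n) (Cy f z n) (Ch f z n)"
  unfolding Hf_module_def fH
proof (intro conjI)
  show "Ch f z n * Cx n = Cx n * dg n (\<lambda>j. cb f z (Suc j))"
    by (rule eq_matI) (auto simp: Ch_dg row_dg col_dg row_Cx col_Cx)
  show "Cy f z n * Ch f z n = dg n (\<lambda>j. cb f z (Suc j)) * Cy f z n"
    by (rule eq_matI) (auto simp: Ch_dg row_dg col_dg row_Cy col_Cy)
  show "Cy f z n * Cx n - Cx n * Cy f z n = dg n (\<lambda>j. cb f z (Suc j)) - Ch f z n"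
  proof (rule eq_matI)
    fix i j assume ij: "i < dim_row (dg n (\<lambda>j. cb f z (Suc j)) - Ch f z n)"
       "j < dim_col (dg n (\<lambda>j. cb f z (Suc j)) - Ch f z n)"
    then have i: "i < n" and j: "j < n" by (auto simp: dg_def)
    show "(Cy f z n * Cx n - Cx n * Cy f z n) $$ (i, j) = (dg n (\<lambda>j. cb f z (Suc j)) - Ch f z n) $$ (i, j)"
      using i j an apply (auto simp: Ch_dg row_dg col_dg row_Cy col_Cy row_Cx col_Cx dg_def ca_cb cb0)
      by (subgoal_tac "n = Suc j"; auto simp: add_eq_0_iff)+
  qed (auto simp: dg_def)
qed auto

lemma Cx_v: "i < n \<Longrightarrow> v \<in> carrier_vec n \<Longrightarrow> (Cx n *\<^sub>v v) $ i = (if 0 < i then v $ (i - 1) else 0)"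
  by (simp add: row_Cx)
lemma Cy_v: "i < n \<Longrightarrow> v \<in> carrier_vec n \<Longrightarrow> (Cy f z n *\<^sub>v v) $ i = (if i + 1 < n then ca f z (i+1) * v $ (i + 1) else 0)"
  by (simp add: row_Cy)
lemma Ch_v: "i < n \<Longrightarrow> v \<in> carrier_vec n \<Longrightarrow> (Ch f z n *\<^sub>v v) $ i = cb f z i * v $ i"
  by (simp add: row_dg Ch_dg)

declare index_mult_mat_vec[simp del]

lemma Cy_unit: "j < n \<Longrightarrow> Cy f z n *\<^sub>v unit_vec n j = (if 0 < j then ca f z j \<cdot>\<^sub>v unit_vec n (j - 1) else 0\<^sub>v n)"
  by (rule eq_vecI) (auto simp: Cy_v)

lemma iter_Cx:
  assumes W: "invariant_subspace n (Cx n) (Cy f z n) (Ch f z n) W" and w: "w \<in> W"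
  shows "((\<lambda>v. Cx n *\<^sub>v v) ^^ p) w \<in> W \<and> (\<forall>i<n. (((\<lambda>v. Cx n *\<^sub>v v) ^^ p) w) $ i = (if p \<le> i then w $ (i - p) else 0))"
proof (induction p)
  case 0 then show ?case using w by simp
next
  case (Suc p)
  let ?u = "((\<lambda>v. Cx n *\<^sub>v v) ^^ p) w"
  have uW: "?u \<in> W" using Suc by blast
  have uc: "?u \<in> carrier_vec n" using uW W unfolding invariant_subspace_def by blast
  have "Cx n *\<^sub>v ?u \<in> W" using uW W unfolding invariant_subspace_def by blast
  moreover have "\<forall>i<n. (Cx n *\<^sub>v ?u) $ i = (if Suc p \<le> i then w $ (i - Suc p) else 0)"
  proof (intro allI impI)
    fix i assume i: "i < n"
    show "(Cx n *\<^sub>v ?u) $ i = (if Suc p \<le> i then w $ (i - Suc p) else 0)"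
      using Suc i uc by (auto simp: Cx_v mult_mat_vec_carrier[OF carriers(1) uc])
  qed
  ultimately show ?case by simp
qed

lemma all_in_W:
  assumes W: "invariant_subspace n (Cx n) (Cy f z n) (Ch f z n) W"
    and units: "\<And>j. j < n \<Longrightarrow> unit_vec n j \<in> W"
  shows "W = carrier_vec n"
proof
  show "W \<subseteq> carrier_vec n" using W unfolding invariant_subspace_def by blast
  show "carrier_vec n \<subseteq> W"
  proof
    fix v :: "complex vec" assume v: "v \<in> carrier_vec n"
    have "vec n (\<lambda>i. if i < m then v $ i else 0) \<in> W" for m
    proof (induction m)
      case 0
      have "vec n (\<lambda>i. if i < 0 then v $ i else 0) = 0\<^sub>v n" by (rule eq_vecI) auto
      then show ?case using W unfolding invariant_subspace_def by simp
    next
      case (Suc m)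
      show ?case
      proof (cases "m < n")
        case True
        have "vec n (\<lambda>i. if i < Suc m then v $ i else 0)
            = vec n (\<lambda>i. if i < m then v $ i else 0) + v $ m \<cdot>\<^sub>v unit_vec n m"
          using True by (intro eq_vecI) (auto simp: less_Suc_eq)
        moreover have "v $ m \<cdot>\<^sub>v unit_vec n m \<in> W" using units[OF True] W unfolding invariant_subspace_def by blast
        ultimately show ?thesis using Suc W unfolding invariant_subspace_def by metis
      next
        case False
        have "vec n (\<lambda>i. if i < Suc m then v $ i else 0) = vec n (\<lambda>i. if i < m then v $ i else 0)"
          using False by (intro eq_vecI) auto
        then show ?thesis using Suc by simp
      qed
    qed
    from this[of n] have "vec n (\<lambda>i. if i < n then v $ i else 0) \<in> W" .
    moreover have "vec n (\<lambda>i. if i < n then v $ i else 0) = v" using v by (intro eq_vecI) auto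
    ultimately show "v \<in> W" by simp
  qed
qed

lemma part2a:
  assumes n: "n \<ge> 1" and nz: "\<forall>i\<in>{1..n-1}. ca f z i \<noteq> 0"
  shows "simple_Hf_module n (Cx n) (Cy f z n) (Ch f z n)"
  unfolding simple_Hf_module_def
proof (intro conjI allI impI)
  show "0 < n" using n by simp
  fix W assume W: "invariant_subspace n (Cx n) (Cy f z n) (Ch f z n) W"
  have Wc: "W \<subseteq> carrier_vec n" and W0: "0\<^sub>v n \<in> W"
    and Wsm: "\<And>c u. u \<in> W \<Longrightarrow> c \<cdot>\<^sub>v u \<in> W"
    and WY: "\<And>u. u \<in> W \<Longrightarrow> Cy f z n *\<^sub>v u \<in> W"
    using W unfolding invariant_subspace_def by blast+
  show "W = {0\<^sub>v n} \<or> W = carrier_vec n"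
  proof (cases "W = {0\<^sub>v n}")
    case True then show ?thesis by simp
  next
    case False
    then obtain w where wW: "w \<in> W" and wne: "w \<noteq> 0\<^sub>v n" using W0 by blast
    have wc: "w \<in> carrier_vec n" using wW Wc by blast
    have "\<exists>k<n. w $ k \<noteq> 0"
    proof (rule ccontr)
      assume "\<not> ?thesis"
      then have "w = 0\<^sub>v n" using wc by (intro eq_vecI) auto
      then show False using wne by simp
    qed
    define k where "k = (LEAST k. k < n \<and> w $ k \<noteq> 0)"
    have k: "k < n \<and> w $ k \<noteq> 0" unfolding k_def using \<open>\<exists>k<n. w $ k \<noteq> 0\<close> by (rule LeastI_ex)
    have kmin: "\<And>l. l < k \<Longrightarrow> w $ l = 0"
      using k unfolding k_def by (metis (mono_tags, lifting) not_less_Least order.strict_trans)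
    define p where "p = n - 1 - k"
    define u where "u = ((\<lambda>v. Cx n *\<^sub>v v) ^^ p) w"
    have u: "u \<in> W" "\<forall>i<n. u $ i = (if p \<le> i then w $ (i - p) else 0)"
      using iter_Cx[OF W wW, of p] unfolding u_def by auto
    have "u = w $ k \<cdot>\<^sub>v unit_vec n (n - 1)"
    proof (rule eq_vecI)
      fix i assume "i < dim_vec (w $ k \<cdot>\<^sub>v unit_vec n (n - 1))"
      then have i: "i < n" by simp
      show "u $ i = (w $ k \<cdot>\<^sub>v unit_vec n (n - 1)) $ i"
      proof (cases "i = n - 1")
        case True then show ?thesis using u i k by (simp add: p_def)
      next
        case False
        then have "p \<le> i \<Longrightarrow> i - p < k" using i k by (simp add: p_def)
        then show ?thesis using u i False kmin by auto
      qed
    next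
      show "dim_vec u = dim_vec (w $ k \<cdot>\<^sub>v unit_vec n (n - 1))" using u Wc by auto
    qed
    then have "(1 / w $ k) \<cdot>\<^sub>v u = unit_vec n (n - 1)" using k by (auto simp: smult_smult_assoc)
    then have top: "unit_vec n (n - 1) \<in> W" using Wsm[OF u(1)] by metis
    have down: "unit_vec n (n - 1 - m) \<in> W" if "m < n" for m
      using that
    proof (induction m)
      case 0 then show ?case using top by simp
    next
      case (Suc m)
      define j where "j = n - 1 - m"
      have j: "0 < j" "j < n" "j \<in> {1..n-1}" using Suc.prems by (auto simp: j_def)
      have "Cy f z n *\<^sub>v unit_vec n j = ca f z j \<cdot>\<^sub>v unit_vec n (j - 1)"
        using j by (simp add: Cy_unit)
      moreover have "Cy f z n *\<^sub>v unit_vec n j \<in> W" using WY Suc j_def by simp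
      ultimately have "(1 / ca f z j) \<cdot>\<^sub>v (ca f z j \<cdot>\<^sub>v unit_vec n (j - 1)) \<in> W" using Wsm by metis
      moreover have "(1 / ca f z j) \<cdot>\<^sub>v (ca f z j \<cdot>\<^sub>v unit_vec n (j - 1)) = unit_vec n (j - 1)"
        using nz j by (auto simp: smult_smult_assoc)
      ultimately show ?case by (simp add: j_def)
    qed
    have "W = carrier_vec n"
    proof (rule all_in_W[OF W])
      fix j assume "j < n"
      then show "unit_vec n j \<in> W" using down[of "n - 1 - j"] by simp
    qed
    then show ?thesis by simp
  qed
qed

lemma part2b:
  assumes n: "n \<ge> 1" and s: "simple_Hf_module n (Cx n) (Cy f z n) (Ch f z n)"
  shows "\<forall>i\<in>{1..n-1}. ca f z i \<noteq> 0"
proof (rule ccontr)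
  assume "\<not> ?thesis"
  then obtain i where i: "1 \<le> i" "i \<le> n - 1" and ai: "ca f z i = 0" by auto
  define W where "W = {v :: complex vec. v \<in> carrier_vec n \<and> (\<forall>k<i. v $ k = 0)}"
  have inv: "invariant_subspace n (Cx n) (Cy f z n) (Ch f z n) W"
    unfolding invariant_subspace_def
  proof (intro conjI ballI allI)
    show "W \<subseteq> carrier_vec n" unfolding W_def by blast
    show "0\<^sub>v n \<in> W" using i unfolding W_def by auto
  next
    fix u v assume "u \<in> W" "v \<in> W" then show "u + v \<in> W" using i unfolding W_def by auto
  next
    fix c u assume "u \<in> W" then show "c \<cdot>\<^sub>v u \<in> W" using i unfolding W_def by auto
  next
    fix u assume u: "u \<in> W"
    then have uc: "u \<in> carrier_vec n" unfolding W_def by blast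
    show "Cx n *\<^sub>v u \<in> W" using u uc i unfolding W_def by (auto simp: Cx_v mult_mat_vec_carrier[OF carriers(1) uc])
    show "Ch f z n *\<^sub>v u \<in> W" using u uc i unfolding W_def by (auto simp: Ch_v mult_mat_vec_carrier[OF carriers(3) uc])
    have "(Cy f z n *\<^sub>v u) $ k = 0" if k: "k < i" for k
    proof (cases "k + 1 = i")
      case True then show ?thesis using k i uc ai by (simp add: Cy_v)
    next
      case False then show ?thesis using k i uc u unfolding W_def by (simp add: Cy_v)
    qed
    then show "Cy f z n *\<^sub>v u \<in> W" unfolding W_def by (simp add: mult_mat_vec_carrier[OF carriers(2) uc])
  qed
  have "unit_vec n (n - 1) \<in> W" using i unfolding W_def by auto
  moreover have "(unit_vec n (n - 1) :: complex vec) \<noteq> 0\<^sub>v n"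
  proof
    assume h: "(unit_vec n (n - 1) :: complex vec) = 0\<^sub>v n"
    have "(unit_vec n (n - 1) :: complex vec) $ (n - 1) = 1" using n by simp
    then show False using h n by simp
  qed
  moreover have "(unit_vec n 0 :: complex vec) \<notin> W" using i n unfolding W_def by auto
  ultimately show False using s inv unfolding simple_Hf_module_def by fastforce
qed

theorem lemma11:
  fixes f :: "complex poly" and n :: nat and z :: complex
  assumes "n \<ge> 1"
    and "z + poly (piter f n) (- z) = 0"
  shows "Hf_module f n (Cx n) (Cy f z n) (Ch f z n)
    \<and> (simple_Hf_module n (Cx n) (Cy f z n) (Ch f z n) \<longleftrightarrow>
         (\<forall>i\<in>{1..n-1}. z + poly (piter f i) (- z) \<noteq> 0))"
  using part1[of n f z] part2a[of n f z] part2b[of n f z] assms unfolding ca_def by blast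

end
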